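(* Consider an LSTM network with weight matrices $W_\star\in\mathbb{R}^{n_x\times n_u}$, $U_\star\in\mathbb{R}^{n_x\times n_x}$, biases $b_\star\in\mathbb{R}^{n_x}$ ($\star\in\{f,i,o,c\}$) and input bound $u_{\max}>0$. If \[ -1+\bar{\sigma}_g^f+\alpha\bar{\sigma}_g^o+\tfrac14\bar{\sigma}_c^x\|U_o\|<\tfrac14\bar{\sigma}_g^f\bar{\sigma}_c^x\|U_o\|<1, \] where $\alpha=\tfrac14\|U_f\|\frac{\bar{\sigma}_g^i\bar{\sigma}_c^c}{1-\bar{\sigma}_g^f}+\bar{\sigma}_g^i\|U_c\|+\tfrac14\|U_i\|\bar{\sigma}_c^c$, then \[ \bar{\sigma}_g^f+\bar{\sigma}_g^o\bar{\sigma}_g^i\|U_c\|<1. \]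
   Context: $\sigma_g(t)=1/(1+e^{-t})$, $\sigma_c=\tanh$. $\|\cdot\|$ is the induced 2-norm, $\|\cdot\|_\infty$ the induced $\infty$-norm. For $\star\in\{f,i,o\}$, $\bar{\sigma}_g^\star=\sigma_g(\|[W_\star u_{\max}\ U_\star\ b_\star]\|_\infty)$ (horizontal concatenation); $\bar{\sigma}_c^c=\sigma_c(\|[W_c u_{\max}\ U_c\ b_c]\|_\infty)$; $\bar{\sigma}_c^x=\sigma_c(\bar{\sigma}_g^i\bar{\sigma}_c^c/(1-\bar{\sigma}_g^f))$. *)

theory Defs
  imports "HOL-Analysis.Analysis"
begin

definition sigmoid :: "real \<Rightarrow> real" where
  "sigmoid t = 1 / (1 + exp (- t))"

definition linf_norm :: "real ^ 'n::finite \<Rightarrow> real" where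
  "linf_norm v = Max (range (\<lambda>i. \<bar>v $ i\<bar>))"

definition induced_inf_norm :: "real ^ 'c::finite ^ 'r::finite \<Rightarrow> real" where
  "induced_inf_norm A = (SUP x\<in>{x. linf_norm x \<le> 1}. linf_norm (A *v x))"

definition induced_2_norm :: "real ^ 'c::finite ^ 'r::finite \<Rightarrow> real" where
  "induced_2_norm A = onorm (\<lambda>x. A *v x)"

text \<open>Horizontal concatenation [W*u_max  U  b], columns indexed by 'u + ('x + unit).\<close>
definition hcat :: "real ^ 'u::finite ^ 'x::finite \<Rightarrow> real \<Rightarrow> real ^ 'x ^ 'x \<Rightarrow> real ^ 'x
    \<Rightarrow> real ^ ('u + ('x + unit)) ^ 'x" where
  "hcat W u U b = (\<chi> i. \<chi> j. (case j of
       Inl k \<Rightarrow> W $ i $ k * u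
     | Inr (Inl k) \<Rightarrow> U $ i $ k
     | Inr (Inr _) \<Rightarrow> b $ i))"

definition sig_g_bar :: "real ^ 'u::finite ^ 'x::finite \<Rightarrow> real ^ 'x ^ 'x \<Rightarrow> real ^ 'x \<Rightarrow> real \<Rightarrow> real" where
  "sig_g_bar W U b umax = sigmoid (induced_inf_norm (hcat W umax U b))"

definition sig_c_bar :: "real ^ 'u::finite ^ 'x::finite \<Rightarrow> real ^ 'x ^ 'x \<Rightarrow> real ^ 'x \<Rightarrow> real \<Rightarrow> real" where
  "sig_c_bar W U b umax = tanh (induced_inf_norm (hcat W umax U b))"

end

theory Submission
  imports Defs
begin

lemma linf_norm_le:
  fixes v :: "real ^ 'n::finite"
  assumes "\<And>i. \<bar>v $ i\<bar> \<le> C"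
  shows "linf_norm v \<le> C"
  unfolding linf_norm_def using assms by (subst Max_le_iff) auto

lemma linf_norm_ge:
  fixes v :: "real ^ 'n::finite"
  shows "\<bar>v $ i\<bar> \<le> linf_norm v"
  unfolding linf_norm_def by (rule Max_ge) auto

lemma induced_inf_norm_nonneg:
  fixes A :: "real ^ 'c::finite ^ 'r::finite"
  shows "0 \<le> induced_inf_norm A"
proof -
  define C where "C = (\<Sum>i\<in>UNIV. \<Sum>j\<in>UNIV. \<bar>A $ i $ j\<bar>)"
  have bd: "linf_norm (A *v x) \<le> C" if "linf_norm x \<le> 1" for x
  proof (rule linf_norm_le)
    fix i
    have "\<bar>(A *v x) $ i\<bar> = \<bar>\<Sum>j\<in>UNIV. A $ i $ j * x $ j\<bar>"
      by (simp add: matrix_vector_mult_def)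
    also have "\<dots> \<le> (\<Sum>j\<in>UNIV. \<bar>A $ i $ j * x $ j\<bar>)" by (rule sum_abs)
    also have "\<dots> \<le> (\<Sum>j\<in>UNIV. \<bar>A $ i $ j\<bar>)"
    proof (rule sum_mono)
      fix j
      have "\<bar>x $ j\<bar> \<le> 1" using linf_norm_ge[of x j] that by linarith
      then show "\<bar>A $ i $ j * x $ j\<bar> \<le> \<bar>A $ i $ j\<bar>"
        by (simp add: abs_mult mult_left_le)
    qed
    also have "\<dots> \<le> C" unfolding C_def
      by (rule member_le_sum) (auto intro: sum_nonneg)
    finally show "\<bar>(A *v x) $ i\<bar> \<le> C" .
  qed
  have z: "linf_norm (0::real^'c) \<le> 1"
    by (rule linf_norm_le) simp
  have "linf_norm (A *v 0) \<le> induced_inf_norm A"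
    unfolding induced_inf_norm_def
    by (rule cSUP_upper) (use z bd in \<open>auto intro!: bdd_aboveI2\<close>)
  moreover have "0 \<le> linf_norm (A *v 0)"
    using linf_norm_ge[of "A *v 0" undefined] by linarith
  ultimately show ?thesis by linarith
qed

lemma sigmoid_bounds: "0 < sigmoid t" "sigmoid t < 1"
proof -
  have e: "exp (- t) > 0" by simp
  have p: "1 + exp (- t) > 1" using e by linarith
  have p0: "0 < 1 + exp (- t)" using e by linarith
  then show "0 < sigmoid t" unfolding sigmoid_def by simp
  show "sigmoid t < 1" unfolding sigmoid_def using p p0 by (simp add: divide_less_eq)
qed

lemma induced_2_norm_nonneg: "0 \<le> induced_2_norm (A :: real ^ 'c::finite ^ 'r::finite)"
  unfolding induced_2_norm_def by (rule onorm_pos_le) simp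

lemma aux: "0 \<le> (a::real) \<Longrightarrow> 0 \<le> b \<Longrightarrow> s \<le> 1/4 * a + s + 1/4 * b"
  by linarith

theorem corollary1:
  fixes Wf Wi Wo Wc :: "real ^ 'u::finite ^ 'x::finite"
    and Uf Ui Uo Uc :: "real ^ 'x ^ 'x"
    and bf bi bo bc :: "real ^ 'x"
    and umax :: real
  assumes "umax > 0"
  defines "sgf \<equiv> sig_g_bar Wf Uf bf umax"
      and "sgi \<equiv> sig_g_bar Wi Ui bi umax"
      and "sgo \<equiv> sig_g_bar Wo Uo bo umax"
      and "scc \<equiv> sig_c_bar Wc Uc bc umax"
  defines "scx \<equiv> tanh (sgi * scc / (1 - sgf))"
  defines "\<alpha> \<equiv> 1/4 * induced_2_norm Uf * (sgi * scc / (1 - sgf))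
                 + sgi * induced_2_norm Uc + 1/4 * induced_2_norm Ui * scc"
  assumes "-1 + sgf + \<alpha> * sgo + 1/4 * scx * induced_2_norm Uo
             < 1/4 * sgf * scx * induced_2_norm Uo"
      and "1/4 * sgf * scx * induced_2_norm Uo < 1"
  shows "sgf + sgo * sgi * induced_2_norm Uc < 1"
proof -
  have f: "0 < sgf" "sgf < 1" unfolding sgf_def sig_g_bar_def by (rule sigmoid_bounds)+
  have i: "0 < sgi" unfolding sgi_def sig_g_bar_def by (rule sigmoid_bounds)
  have o: "0 < sgo" unfolding sgo_def sig_g_bar_def by (rule sigmoid_bounds)
  have c: "0 \<le> scc" unfolding scc_def sig_c_bar_def
    using induced_inf_norm_nonneg by simp
  have q: "0 \<le> sgi * scc / (1 - sgf)" using f i c by simp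
  have x: "0 \<le> scx" unfolding scx_def using q by simp
  have nf: "0 \<le> induced_2_norm Uf" and ni: "0 \<le> induced_2_norm Ui"
    and no: "0 \<le> induced_2_norm Uo" by (rule induced_2_norm_nonneg)+
  have "0 \<le> induced_2_norm Uf * (sgi * scc / (1 - sgf))" using nf q by (rule mult_nonneg_nonneg)
  moreover have "0 \<le> induced_2_norm Ui * scc" using ni c by simp
  ultimately have a: "\<alpha> \<ge> sgi * induced_2_norm Uc" unfolding \<alpha>_def by (simp only: mult.assoc) (rule aux)
  have "\<alpha> * sgo \<ge> sgo * sgi * induced_2_norm Uc"
    using mult_right_mono[OF a, of sgo] o by (simp add: mult_ac)
  moreover have "scx * induced_2_norm Uo * (1 - sgf) \<ge> 0"
    using x no f by simp
  then have "1/4 * sgf * scx * induced_2_norm Uo \<le> 1/4 * scx * induced_2_norm Uo"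
    by (simp add: algebra_simps)
  ultimately show ?thesis using assms(8) by linarith
qed

end
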